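(* Let $k\geq 2$ be an integer. The function $F^k$ is increasing on the interval $(2(k-1),\infty)$.
   Context: For a positive integer $k$, define $F^k:(0,\infty)\to\mathbb{R}$ by $F^k(x)=\delta_0^k(x)-k(x-k)-1$, where $\delta_0^k(x)=2x\sum_{j=1}^{k/2}\cos\left(\frac{(k-(2j-1))\pi}{x}\right)$ if $k$ is even, and $\delta_0^k(x)=x+2x\sum_{j=1}^{(k-1)/2}\cos\left(\frac{(k-(2j-1))\pi}{x}\right)$ if $k$ is odd (an empty sum is $0$). *)

theory Defs
  imports "HOL-Analysis.Analysis"
begin

definition delta0 :: "nat \<Rightarrow> real \<Rightarrow> real" where
  "delta0 k x =
     (if even k
      then 2 * x * (\<Sum>j=1..k div 2. cos ((real k - (2 * real j - 1)) * pi / x))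
      else x + 2 * x * (\<Sum>j=1..(k - 1) div 2. cos ((real k - (2 * real j - 1)) * pi / x)))"

definition F :: "nat \<Rightarrow> real \<Rightarrow> real" where
  "F k x = delta0 k x - real k * (x - real k) - 1"

end

theory Submission
  imports Defs
begin

lemma g_gt:
  fixes t :: real
  assumes "0 < t" "t \<le> pi/2"
  shows "1 < cos t + t * sin t"
proof -
  have "(\<lambda>s. cos s + s * sin s) 0 < (\<lambda>s. cos s + s * sin s) t"
  proof (rule DERIV_pos_imp_increasing_open[OF assms(1)])
    fix s :: real assume s: "0 < s" "s < t"
    have "DERIV (\<lambda>s. cos s + s * sin s) s :> s * cos s"
      by (auto intro!: derivative_eq_intros)
    moreover have "cos s > 0" using s assms by (intro cos_gt_zero_pi) auto
    ultimately show "\<exists>y. DERIV (\<lambda>s. cos s + s * sin s) s :> y \<and> y > 0"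
      using s by (intro exI[of _ "s * cos s"]) auto
  next
    show "continuous_on {0..t} (\<lambda>s. cos s + s * sin s)"
      by (intro continuous_intros)
  qed
  then show ?thesis by simp
qed

lemma phi_mono:
  fixes a x y :: real
  assumes a: "a > 0" and xa: "2 * a / pi < x" and xy: "x < y"
  shows "x * cos (a / x) - x < y * cos (a / y) - y"
proof -
  have "(\<lambda>z. z * cos (a / z) - z) x < (\<lambda>z. z * cos (a / z) - z) y"
  proof (rule DERIV_pos_imp_increasing[OF xy])
    fix z assume z: "x \<le> z" "z \<le> y"
    have pa: "2 * a / pi > 0" using a by simp
    have zpos: "z > 0" using z xa pa by linarith
    have "2 * a / pi < z" using z xa by linarith
    hence "2 * a < z * pi" using pi_gt_zero by (simp add: divide_less_eq)
    hence t2: "a / z < pi / 2" using zpos by (simp add: divide_less_eq field_simps)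
    have t0: "a / z > 0" using a zpos by simp
    have "DERIV (\<lambda>z. z * cos (a / z) - z) z :> cos (a / z) + (a / z) * sin (a / z) - 1"
      using zpos by (auto intro!: derivative_eq_intros simp: field_simps power2_eq_square)
    moreover have "cos (a / z) + (a / z) * sin (a / z) - 1 > 0"
      using g_gt[OF t0] t2 by simp
    ultimately show "\<exists>y. DERIV (\<lambda>z. z * cos (a / z) - z) z :> y \<and> y > 0" by blast
  qed
  then show ?thesis by simp
qed

theorem proposition3p1:
  fixes k :: nat
  assumes "k \<ge> 2"
  shows "strict_mono_on {2 * (real k - 1)<..} (F k)"
proof (rule strict_mono_onI)
  fix r s :: real
  assume r: "r \<in> {2 * (real k - 1)<..}" and s: "s \<in> {2 * (real k - 1)<..}" and rs: "r < s"
  define N where "N = (if even k then k div 2 else (k - 1) div 2)"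
  define a where "a = (\<lambda>j::nat. (real k - (2 * real j - 1)) * pi)"
  define phi where "phi = (\<lambda>x j. x * cos (a j / x) - x)"
  have N1: "N \<ge> 1" using assms unfolding N_def by presburger
  have Fx: "F k x = 2 * (\<Sum>j=1..N. phi x j) + (real k ^ 2 - 1)" for x
  proof -
    have sp: "(\<Sum>j=1..N. phi x j) = x * (\<Sum>j=1..N. cos (a j / x)) - real N * x"
      unfolding phi_def by (simp add: sum_subtractf sum_distrib_left)
    have ac: "a j / x = (real k - (2 * real j - 1)) * pi / x" for j by (simp add: a_def)
    show ?thesis
    proof (cases "even k")
      case True
      have kN: "real k = 2 * real N" using True by (auto simp: N_def)
      have "F k x = 2 * x * (\<Sum>j=1..N. cos (a j / x)) - real k * (x - real k) - 1"
        using True by (simp add: F_def delta0_def N_def ac)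
      then show ?thesis unfolding sp kN power2_eq_square by algebra
    next
      case False
      have kN0: "k = 2 * N + 1" using False unfolding N_def by presburger
      have kN: "real k = 2 * real N + 1" unfolding kN0 by simp
      have "F k x = x + 2 * x * (\<Sum>j=1..N. cos (a j / x)) - real k * (x - real k) - 1"
        using False by (simp add: F_def delta0_def N_def ac)
      then show ?thesis unfolding sp kN power2_eq_square by algebra
    qed
  qed
  have "(\<Sum>j=1..N. phi r j) < (\<Sum>j=1..N. phi s j)"
  proof (rule sum_strict_mono)
    show "{1..N} \<noteq> {}" using N1 by simp
    fix j assume j: "j \<in> {1..N}"
    have jk: "2 * j \<le> k" using j by (auto simp: N_def split: if_splits)
    have jr: "2 * real j \<le> real k" using jk by (metis of_nat_le_iff of_nat_mult of_nat_numeral)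
    have j1: "real j \<ge> 1" using j by auto
    have apos: "a j > 0" using jr j1 by (simp add: a_def)
    have "2 * a j / pi = 2 * (real k - (2 * real j - 1))" by (simp add: a_def)
    also have "\<dots> \<le> 2 * (real k - 1)" using j1 by simp
    finally have "2 * a j / pi < r" using r by simp
    then show "phi r j < phi s j" unfolding phi_def using phi_mono[OF apos _ rs] by simp
  qed simp
  then show "F k r < F k s" by (simp add: Fx)
qed

end
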